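(* Suppose $P$ has a positive real eigenvalue different from $1$, and let $\theta$ be the largest positive real eigenvalue of $P$ different from $1$. Let $\mathcal G$ be a finite nonempty collection of allowed words such that some symbol $i\in\Sigma$ occurs in every word of $\mathcal G$. Then $0<\rho(H_{\mathcal G})\le-\ln\theta$.
   Context: Let $\Sigma=\{1,\dots,N\}$, $A$ an irreducible $N\times N$ $0$–$1$ matrix, $\Sigma_A=\{x\in\Sigma^{\mathbb N}:A_{x_nx_{n+1}}=1\ \forall n\}$ with left shift $\sigma$. A word is allowed if it occurs in some element of $\Sigma_A$; $C_u$ is the set of $x\in\Sigma_A$ beginning with $u$. $P$ is a row-stochastic matrix with $P_{ij}>0$ iff $A_{ij}=1$, $\mathbf p$ its stationary vector, $\mu=\mu_P$ the Markov measure $\mu(C_w)=p_{w_1}P_{w_1w_2}\cdots P_{w_{n-1}w_n}$. For a finite collection $\mathcal G$ of allowed words, $H_{\mathcal G}=\bigcup_{w\in\mathcal G}C_w$. For a hole $H$, $\mathcal W_m=\{x:\sigma^ix\notin H,0\le i\le m\}$ and $\rho(H)=-\lim_m\frac1m\ln\mu(\mathcal W_m)$. *)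

theory Defs
  imports "HOL-Analysis.Analysis"
begin

text \<open>The alphabet Sigma = {1..N} is modelled by a finite type 'n (N = CARD('n)).
  Matrices are real^'n^'n, entry (i,j) is M$i$j.\<close>

fun mpow :: "real^'n^'n \<Rightarrow> nat \<Rightarrow> real^'n^'n" where
  "mpow M 0 = mat 1"
| "mpow M (Suc k) = M ** mpow M k"

definition zero_one_matrix :: "real^'n^'n \<Rightarrow> bool" where
  "zero_one_matrix A \<longleftrightarrow> (\<forall>i j. A$i$j = 0 \<or> A$i$j = 1)"

definition irreducible_matrix :: "real^'n^'n \<Rightarrow> bool" where
  "irreducible_matrix A \<longleftrightarrow> (\<forall>i j. \<exists>k\<ge>1. (mpow A k)$i$j > 0)"

definition row_stochastic :: "real^'n^'n \<Rightarrow> bool" where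
  "row_stochastic P \<longleftrightarrow> (\<forall>i j. P$i$j \<ge> 0) \<and> (\<forall>i. (\<Sum>j\<in>UNIV. P$i$j) = 1)"

definition stationary_vector :: "real^'n^'n \<Rightarrow> real^'n \<Rightarrow> bool" where
  "stationary_vector P p \<longleftrightarrow> (\<forall>i. p$i \<ge> 0) \<and> (\<Sum>i\<in>UNIV. p$i) = 1 \<and> p v* P = p"

definition real_eigenvalue :: "real^'n^'n \<Rightarrow> real \<Rightarrow> bool" where
  "real_eigenvalue M t \<longleftrightarrow> (\<exists>v. v \<noteq> 0 \<and> M *v v = t *s v)"

definition SFT :: "real^'n^'n \<Rightarrow> (nat \<Rightarrow> 'n) set" where
  "SFT A = {x. \<forall>k. A$(x k)$(x (Suc k)) = 1}"

definition shift_pow :: "nat \<Rightarrow> (nat \<Rightarrow> 'n) \<Rightarrow> (nat \<Rightarrow> 'n)" where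
  "shift_pow i x = (\<lambda>k. x (k + i))"

definition cylinder :: "real^'n^'n \<Rightarrow> 'n list \<Rightarrow> (nat \<Rightarrow> 'n) set" where
  "cylinder A u = {x \<in> SFT A. \<forall>k<length u. x k = u ! k}"

definition allowed_word :: "real^'n^'n \<Rightarrow> 'n list \<Rightarrow> bool" where
  "allowed_word A u \<longleftrightarrow> (\<exists>x\<in>SFT A. \<exists>m. \<forall>k<length u. x (m + k) = u ! k)"

definition hole :: "real^'n^'n \<Rightarrow> 'n list set \<Rightarrow> (nat \<Rightarrow> 'n) set" where
  "hole A G = (\<Union>w\<in>G. cylinder A w)"

definition survivors :: "real^'n^'n \<Rightarrow> (nat \<Rightarrow> 'n) set \<Rightarrow> nat \<Rightarrow> (nat \<Rightarrow> 'n) set" where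
  "survivors A H m = {x \<in> SFT A. \<forall>i\<le>m. shift_pow i x \<notin> H}"

definition markov_cyl :: "real^'n^'n \<Rightarrow> real^'n \<Rightarrow> 'n list \<Rightarrow> real" where
  "markov_cyl P p w =
     (if w = [] then 1 else p$(hd w) * (\<Prod>k<length w - 1. P$(w!k)$(w!(Suc k))))"

text \<open>Markov measure of a set S that is a union of cylinders of length n
  (i.e. S depends only on the first n coordinates): the sum of the cylinder
  measures of the length-n cylinders contained in S (cylinders are disjoint).\<close>

definition markov_meas_fin ::
  "real^'n^'n \<Rightarrow> real^'n^'n \<Rightarrow> real^'n \<Rightarrow> nat \<Rightarrow> (nat \<Rightarrow> 'n) set \<Rightarrow> real" where
  "markov_meas_fin A P p n S =
     (\<Sum>w\<in>{w. length w = n \<and> cylinder A w \<subseteq> S}. markov_cyl P p w)"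

text \<open>mu(W_m) for the hole H_G: W_m depends only on the first m + L coordinates,
  L the maximal length of a word in G.\<close>

definition survival_prob ::
  "real^'n^'n \<Rightarrow> real^'n^'n \<Rightarrow> real^'n \<Rightarrow> 'n list set \<Rightarrow> nat \<Rightarrow> real" where
  "survival_prob A P p G m =
     markov_meas_fin A P p (m + Max (length ` G)) (survivors A (hole A G) m)"

end

theory Submission
  imports Defs
begin


fun pw :: "real^'n^'n \<Rightarrow> 'n list \<Rightarrow> real" where
  "pw P [] = 1"
| "pw P [a] = 1"
| "pw P (a # b # w) = P$a$b * pw P (b # w)"

lemma pw_prod: "pw P w = (\<Prod>k<length w - 1. P$(w!k)$(w!(Suc k)))"
proof (induction P w rule: pw.induct)
  case (3 P a b w)
  have "(\<Prod>k<length (a#b#w) - 1. P$((a#b#w)!k)$((a#b#w)!(Suc k)))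
      = (\<Prod>k<Suc (length (b#w) - 1). P$((a#b#w)!k)$((a#b#w)!(Suc k)))" by simp
  also have "\<dots> = P$a$b * (\<Prod>k<length (b#w) - 1. P$((b#w)!k)$((b#w)!(Suc k)))"
    by (subst prod.lessThan_Suc_shift) simp
  finally show ?case using 3 by simp
qed auto

lemma markov_cyl_pw: "w \<noteq> [] \<Longrightarrow> markov_cyl P p w = p$(hd w) * pw P w"
  by (simp add: markov_cyl_def pw_prod)

lemma pw_append: "x \<noteq> [] \<Longrightarrow> y \<noteq> [] \<Longrightarrow> pw P (x @ y) = pw P x * P$(last x)$(hd y) * pw P y"
proof (induction P x rule: pw.induct)
  case (2 P a) then show ?case by (cases y) auto
next
  case (3 P a b w) then show ?case by simp
qed auto

lemma pw_snoc: "x \<noteq> [] \<Longrightarrow> pw P (x @ [l]) = pw P x * P$(last x)$l"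
  using pw_append[of x "[l]" P] by simp

lemma pw_cons: "y \<noteq> [] \<Longrightarrow> pw P (a # y) = P$a$(hd y) * pw P y"
  by (cases y) auto

definition occ :: "'n list set \<Rightarrow> 'n list \<Rightarrow> bool" where
  "occ G w \<longleftrightarrow> (\<exists>u\<in>G. \<exists>xs ys. w = xs @ u @ ys)"

lemma occ_appendL: "occ G x \<Longrightarrow> occ G (x @ y)"
  unfolding occ_def by (metis append.assoc)
lemma occ_appendR: "occ G y \<Longrightarrow> occ G (x @ y)"
  unfolding occ_def by (metis append.assoc)

lemma finite_len: "finite {w :: ('n::finite) list. length w = n}"
  using finite_lists_length_eq[of "UNIV :: 'n set" n] by simp

lemma finite_len_P: "finite {w :: ('n::finite) list. length w = n \<and> Q w}"
  by (rule finite_subset[OF _ finite_len[of n]]) auto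

lemma len_Suc_snoc:
  "{w :: 'a list. length w = Suc n} = (\<lambda>(v,l). v @ [l]) ` ({v. length v = n} \<times> UNIV)"
proof -
  { fix w :: "'a list" assume "length w = Suc n"
    then have "w = butlast w @ [last w]" "length (butlast w) = n"
      by (metis append_butlast_last_id list.size(3) nat.distinct(1), simp)
    then have "w \<in> (\<lambda>(v,l). v @ [l]) ` ({v. length v = n} \<times> UNIV)"
      by (intro image_eqI[of _ _ "(butlast w, last w)"]) auto }
  then show ?thesis by auto
qed

lemma inj_snoc: "inj_on (\<lambda>(v,l). v @ [l]) X"
  unfolding inj_on_def by clarsimp

lemma len_append:
  "{w :: 'a list. length w = m + n} = (\<lambda>(x,y). x @ y) ` ({x. length x = m} \<times> {y. length y = n})"
proof -
  { fix w :: "'a list" assume "length w = m + n"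
    then have "w = take m w @ drop m w" "length (take m w) = m" "length (drop m w) = n" by auto
    then have "w \<in> (\<lambda>(x,y). x @ y) ` ({x. length x = m} \<times> {y. length y = n})"
      by (intro image_eqI[of _ _ "(take m w, drop m w)"]) auto }
  then show ?thesis by auto
qed

lemma inj_append: "inj_on (\<lambda>(x,y). x @ y) ({x. length x = m} \<times> Y)"
  unfolding inj_on_def by (clarsimp simp: append_eq_append_conv)


lemma mpow_nonneg: "(\<forall>i j. M$i$j \<ge> (0::real)) \<Longrightarrow> (mpow M k)$i$j \<ge> 0"
proof (induction k arbitrary: i j)
  case 0 then show ?case by (simp add: mat_def)
next
  case (Suc k) then show ?case
    by (simp add: matrix_matrix_mult_def sum_nonneg)
qed

locale mk =
  fixes A P :: "real^'n^'n" and p :: "real^'n" and G :: "'n list set" and i0 :: 'n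
  assumes zo: "zero_one_matrix A" and irr: "irreducible_matrix A"
    and rs: "row_stochastic P" and PA: "\<forall>i j. P$i$j > 0 \<longleftrightarrow> A$i$j = 1"
    and st: "stationary_vector P p"
    and finG: "finite G" and neG: "G \<noteq> {}" and allw: "\<forall>w\<in>G. allowed_word A w"
    and iin: "\<forall>w\<in>G. i0 \<in> set w"
begin

lemma Pnn: "P$i$j \<ge> 0" using rs by (simp add: row_stochastic_def)
lemma Psum: "(\<Sum>j\<in>UNIV. P$i$j) = 1" using rs by (simp add: row_stochastic_def)
lemma P0: "A$i$j \<noteq> 1 \<Longrightarrow> P$i$j = 0" using PA Pnn[of i j] by force
lemma Ppos: "A$i$j = 1 \<Longrightarrow> P$i$j > 0" using PA by blast
lemma Ann: "A$i$j \<ge> 0" using zo unfolding zero_one_matrix_def by (metis order.refl zero_le_one)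
lemma pnn: "p$j \<ge> 0" using st by (simp add: stationary_vector_def)
lemma psum: "(\<Sum>j\<in>UNIV. p$j) = 1" using st by (simp add: stationary_vector_def)

lemma pw_nonneg: "pw P w \<ge> 0"
  unfolding pw_prod by (intro prod_nonneg) (auto intro: Pnn)

definition valid :: "'n list \<Rightarrow> bool" where
  "valid w \<longleftrightarrow> (\<forall>k. Suc k < length w \<longrightarrow> A$(w!k)$(w!Suc k) = 1)"

lemma pw_pos: "valid w \<Longrightarrow> pw P w > 0"
  unfolding pw_prod valid_def by (intro prod_pos) (auto intro: Ppos)

lemma pw_zero: "\<not> valid w \<Longrightarrow> pw P w = 0"
  unfolding pw_prod valid_def
  by (rule prod_zero) (auto intro!: bexI P0)

lemma valid_cons: "valid (a # w) \<longleftrightarrow> (w = [] \<or> (A$a$(hd w) = 1 \<and> valid w))"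
  unfolding valid_def
  apply (cases w)
   apply simp
  apply (auto simp: less_Suc_eq_0_disj)
  done

lemma path_exists:
  "(mpow A k)$i$j > 0 \<Longrightarrow> \<exists>\<pi>. length \<pi> = Suc k \<and> hd \<pi> = i \<and> last \<pi> = j \<and> valid \<pi>"
proof (induction k arbitrary: i)
  case 0
  then have "i = j" by (simp add: mat_def split: if_splits)
  then show ?case by (intro exI[of _ "[i]"]) (simp add: valid_def)
next
  case (Suc k)
  have "(\<Sum>m\<in>UNIV. A$i$m * (mpow A k)$m$j) > 0"
    using Suc.prems by (simp add: matrix_matrix_mult_def)
  then obtain m where m: "A$i$m * (mpow A k)$m$j > 0"
    using sum_nonpos[of UNIV "\<lambda>m. A$i$m * (mpow A k)$m$j"] by (meson not_le)
  have "A$i$m \<noteq> 0" using m by auto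
  then have Aim: "A$i$m = 1" using zo unfolding zero_one_matrix_def by blast
  then have "(mpow A k)$m$j > 0" using m by simp
  then obtain \<pi> where \<pi>: "length \<pi> = Suc k" "hd \<pi> = m" "last \<pi> = j" "valid \<pi>"
    using Suc.IH by blast
  show ?case
    by (intro exI[of _ "i # \<pi>"]) (use \<pi> Aim in \<open>auto simp: valid_cons\<close>)
qed

lemma mpowP_pos: "(mpow A k)$i$j > 0 \<Longrightarrow> (mpow P k)$i$j > 0"
proof (induction k arbitrary: i)
  case 0 then show ?case by (simp add: mat_def split: if_splits)
next
  case (Suc k)
  have "(\<Sum>m\<in>UNIV. A$i$m * (mpow A k)$m$j) > 0"
    using Suc.prems by (simp add: matrix_matrix_mult_def)
  then obtain m where m: "A$i$m * (mpow A k)$m$j > 0"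
    using sum_nonpos[of UNIV "\<lambda>m. A$i$m * (mpow A k)$m$j"] by (meson not_le)
  have "A$i$m \<noteq> 0" using m by auto
  then have Aim: "A$i$m = 1" using zo unfolding zero_one_matrix_def by blast
  then have "(mpow A k)$m$j > 0" using m by simp
  then have M: "(mpow P k)$m$j > 0" using Suc.IH by blast
  have nn: "\<And>l. P$i$l * (mpow P k)$l$j \<ge> 0"
    using mpow_nonneg[of P k] Pnn by (simp add: mult_nonneg_nonneg)
  have "0 < P$i$m * (mpow P k)$m$j" using Ppos[OF Aim] M by simp
  also have "\<dots> \<le> (\<Sum>l\<in>UNIV. P$i$l * (mpow P k)$l$j)"
    by (rule member_le_sum) (use nn in auto)
  finally show ?case by (simp add: matrix_matrix_mult_def)
qed

lemma p_inv: "p v* mpow P k = p"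
proof (induction k)
  case 0 then show ?case by (simp add: vector_matrix_mult_def mat_def vec_eq_iff if_distrib sum.delta cong: if_cong)
next
  case (Suc k)
  have "p v* P = p" using st by (simp add: stationary_vector_def)
  then show ?case using Suc by (simp add: vector_matrix_mul_assoc[symmetric])
qed

lemma ppos: "p$j > 0"
proof -
  have "\<exists>l. p$l > 0"
  proof (rule ccontr)
    assume "\<not> ?thesis"
    then have "\<forall>l. p$l = 0" using pnn by (metis less_eq_real_def)
    then show False using psum by simp
  qed
  then obtain l where l: "p$l > 0" by blast
  obtain k where "k \<ge> 1" and Ak: "(mpow A k)$l$j > 0" using irr unfolding irreducible_matrix_def by blast
  have M: "(mpow P k)$l$j > 0" using mpowP_pos[OF Ak] .
  have "p$j = (p v* mpow P k)$j" using p_inv by simp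
  also have "\<dots> = (\<Sum>i\<in>UNIV. p$i * (mpow P k)$i$j)" by (simp add: vector_matrix_mult_def)
  also have "\<dots> \<ge> p$l * (mpow P k)$l$j"
    by (rule member_le_sum) (auto intro: mult_nonneg_nonneg pnn mpow_nonneg Pnn)
  finally show ?thesis using l M by (smt (verit) mult_pos_pos)
qed

end

context mk begin

definition ap :: "nat \<Rightarrow> real" where
  "ap n = (\<Sum>w\<in>{w. length w = n \<and> \<not> occ G w}. markov_cyl P p w)"

definition b :: "nat \<Rightarrow> 'n \<Rightarrow> real" where
  "b n j = (\<Sum>w\<in>{w. length w = n \<and> hd w = j \<and> \<not> occ G w}. pw P w)"

definition bt :: "nat \<Rightarrow> real" where
  "bt n = Max (range (b n))"

lemma b_nonneg: "b n j \<ge> 0"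
  unfolding b_def by (intro sum_nonneg pw_nonneg)

lemma b_le_bt: "b n j \<le> bt n"
  unfolding bt_def by (rule Max_ge) auto

lemma bt_nonneg: "bt n \<ge> 0"
  using b_nonneg[of n] b_le_bt[of n] by (meson order.trans)

lemma ap_b: "n \<ge> 1 \<Longrightarrow> ap n = (\<Sum>j\<in>UNIV. p$j * b n j)"
proof -
  assume n: "n \<ge> 1"
  let ?S = "{w. length w = n \<and> \<not> occ G w}"
  have "ap n = (\<Sum>w\<in>?S. p$(hd w) * pw P w)"
    unfolding ap_def using n by (intro sum.cong refl markov_cyl_pw) auto
  also have "\<dots> = (\<Sum>j\<in>UNIV. \<Sum>w\<in>{w. w \<in> ?S \<and> hd w = j}. p$(hd w) * pw P w)"
    by (rule sum.group[symmetric]) (auto intro: finite_len_P)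
  also have "\<dots> = (\<Sum>j\<in>UNIV. p$j * b n j)"
    unfolding b_def sum_distrib_left
    by (intro sum.cong refl) (auto intro!: sum.cong)
  finally show ?thesis .
qed

lemma snoc_set:
  assumes "\<And>v l. length v = N \<Longrightarrow> Q (v @ [l]) = R v"
  shows "{w. length w = Suc N \<and> Q w} = (\<lambda>(v,l). v @ [l]) ` ({v. length v = N \<and> R v} \<times> UNIV)"
proof -
  have "{w. length w = Suc N \<and> Q w} = {w. length w = Suc N} \<inter> {w. Q w}" by auto
  also have "\<dots> = (\<lambda>(v,l). v @ [l]) ` ({v. length v = N} \<times> UNIV) \<inter> {w. Q w}"
    by (simp add: len_Suc_snoc)
  also have "\<dots> = (\<lambda>(v,l). v @ [l]) ` ({v. length v = N \<and> R v} \<times> UNIV)"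
    using assms by auto
  finally show ?thesis .
qed

lemma sum_snoc:
  assumes "\<And>v l. length v = N \<Longrightarrow> Q (v @ [l]) = R v"
  shows "(\<Sum>w\<in>{w. length w = Suc N \<and> Q w}. f w)
       = (\<Sum>v\<in>{v. length v = N \<and> R v}. \<Sum>l\<in>UNIV. f (v @ [l]))"
proof -
  have e: "{w. length w = Suc N \<and> Q w} = (\<lambda>(v,l). v @ [l]) ` ({v. length v = N \<and> R v} \<times> UNIV)"
    by (rule snoc_set) (rule assms)
  have "(\<Sum>w\<in>{w. length w = Suc N \<and> Q w}. f w)
      = (\<Sum>w\<in>(\<lambda>(v,l). v @ [l]) ` ({v. length v = N \<and> R v} \<times> UNIV). f w)"
    by (simp only: e)
  also have "\<dots> = (\<Sum>(v,l)\<in>{v. length v = N \<and> R v} \<times> UNIV. f (v @ [l]))"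
    by (subst sum.reindex[OF inj_snoc]) (simp add: case_prod_unfold)
  also have "\<dots> = (\<Sum>v\<in>{v. length v = N \<and> R v}. \<Sum>l\<in>UNIV. f (v @ [l]))"
    by (simp add: sum.cartesian_product)
  finally show ?thesis .
qed

lemma tot: "n \<ge> 1 \<Longrightarrow> (\<Sum>w\<in>{w. length w = n \<and> hd w = j}. pw P w) = 1"
proof (induction n rule: nat_induct_at_least)
  case base
  have "{w. length w = 1 \<and> hd w = j} = {[j]}"
    by (auto simp: length_Suc_conv)
  then show ?case by simp
next
  case (Suc n)
  have "(\<Sum>w\<in>{w. length w = Suc n \<and> hd w = j}. pw P w)
      = (\<Sum>v\<in>{v. length v = n \<and> hd v = j}. \<Sum>l\<in>UNIV. pw P (v @ [l]))"
    by (rule sum_snoc) (use Suc.hyps in \<open>auto simp: hd_append\<close>)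
  also have "\<dots> = (\<Sum>v\<in>{v. length v = n \<and> hd v = j}. pw P v)"
  proof (intro sum.cong refl)
    fix v assume "v \<in> {v. length v = n \<and> hd v = j}"
    then have "v \<noteq> []" using Suc.hyps by auto
    then show "(\<Sum>l\<in>UNIV. pw P (v @ [l])) = pw P v"
      by (simp add: pw_snoc sum_distrib_left[symmetric] Psum)
  qed
  finally show ?case using Suc.IH by simp
qed

lemma b_le1: "n \<ge> 1 \<Longrightarrow> b n j \<le> 1"
proof -
  assume n: "n \<ge> 1"
  have "b n j \<le> (\<Sum>w\<in>{w. length w = n \<and> hd w = j}. pw P w)"
    unfolding b_def by (rule sum_mono2) (auto intro: finite_len_P pw_nonneg)
  then show ?thesis using tot[OF n] by simp
qed

lemma bt_le1: "n \<ge> 1 \<Longrightarrow> bt n \<le> 1"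
  unfolding bt_def using b_le1 by (auto intro!: Max.boundedI)

lemma inner: "(\<Sum>y\<in>{y. length y = n \<and> \<not> occ G y}. P$c$(hd y) * pw P y) \<le> bt n"
proof -
  let ?S = "{y. length y = n \<and> \<not> occ G y}"
  have "(\<Sum>y\<in>?S. P$c$(hd y) * pw P y) = (\<Sum>l\<in>UNIV. \<Sum>y\<in>{y. y \<in> ?S \<and> hd y = l}. P$c$(hd y) * pw P y)"
    by (rule sum.group[symmetric]) (auto intro: finite_len_P)
  also have "\<dots> = (\<Sum>l\<in>UNIV. P$c$l * b n l)"
    unfolding b_def sum_distrib_left
    by (intro sum.cong refl) (auto intro!: sum.cong)
  also have "\<dots> \<le> (\<Sum>l\<in>UNIV. P$c$l * bt n)"
    by (intro sum_mono mult_left_mono b_le_bt Pnn)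
  also have "\<dots> = bt n" by (simp add: sum_distrib_right[symmetric] Psum)
  finally show ?thesis .
qed

lemma split: assumes m: "m \<ge> 1" and n: "n \<ge> 1" shows "b (m + n) j \<le> b m j * bt n"
proof -
  let ?X = "{x. length x = m \<and> hd x = j \<and> \<not> occ G x}"
  let ?Y = "{y. length y = n \<and> \<not> occ G y}"
  have fX: "finite ?X" and fY: "finite ?Y" by (auto intro: finite_len_P)
  have sub: "{w. length w = m + n \<and> hd w = j \<and> \<not> occ G w} \<subseteq> (\<lambda>(x,y). x @ y) ` (?X \<times> ?Y)"
  proof
    fix w assume w: "w \<in> {w. length w = m + n \<and> hd w = j \<and> \<not> occ G w}"
    have e: "w = take m w @ drop m w" by simp
    have "take m w \<noteq> []" using w m by auto
    have "hd (take m w) = j" using w m by simp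
    moreover have "\<not> occ G (take m w)"
    proof
      assume "occ G (take m w)"
      then have "occ G (take m w @ drop m w)" by (rule occ_appendL)
      then show False using w by simp
    qed
    moreover have "\<not> occ G (drop m w)"
    proof
      assume "occ G (drop m w)"
      then have "occ G (take m w @ drop m w)" by (rule occ_appendR)
      then show False using w by simp
    qed
    ultimately show "w \<in> (\<lambda>(x,y). x @ y) ` (?X \<times> ?Y)"
      using w by (intro image_eqI[of _ _ "(take m w, drop m w)"]) auto
  qed
  have inj: "inj_on (\<lambda>(x,y). x @ y) (?X \<times> ?Y)"
    by (rule inj_on_subset[OF inj_append[of m ?Y]]) auto
  have "b (m + n) j \<le> (\<Sum>w\<in>(\<lambda>(x,y). x @ y) ` (?X \<times> ?Y). pw P w)"
    unfolding b_def by (rule sum_mono2[OF _ sub]) (auto intro: fX fY pw_nonneg)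
  also have "\<dots> = (\<Sum>(x,y)\<in>?X \<times> ?Y. pw P (x @ y))"
    by (subst sum.reindex[OF inj]) (simp add: case_prod_unfold)
  also have "\<dots> = (\<Sum>x\<in>?X. \<Sum>y\<in>?Y. pw P (x @ y))"
    by (simp add: sum.cartesian_product)
  also have "\<dots> = (\<Sum>x\<in>?X. pw P x * (\<Sum>y\<in>?Y. P$(last x)$(hd y) * pw P y))"
  proof (intro sum.cong refl)
    fix x assume x: "x \<in> ?X"
    show "(\<Sum>y\<in>?Y. pw P (x @ y)) = pw P x * (\<Sum>y\<in>?Y. P$(last x)$(hd y) * pw P y)"
      unfolding sum_distrib_left
    proof (intro sum.cong refl)
      fix y assume y: "y \<in> ?Y"
      have "x \<noteq> []" "y \<noteq> []" using x y m n by auto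
      then show "pw P (x @ y) = pw P x * (P$(last x)$(hd y) * pw P y)"
        by (simp add: pw_append)
    qed
  qed
  also have "\<dots> \<le> (\<Sum>x\<in>?X. pw P x * bt n)"
    by (intro sum_mono mult_left_mono inner pw_nonneg)
  also have "\<dots> = b m j * bt n" by (simp add: b_def sum_distrib_right)
  finally show ?thesis .
qed

lemma b_mono_Suc: "m \<ge> 1 \<Longrightarrow> b (Suc m) j \<le> b m j"
proof -
  assume m: "m \<ge> 1"
  have "b (m + 1) j \<le> b m j * bt 1" by (rule split[OF m]) simp
  also have "\<dots> \<le> b m j * 1" by (intro mult_left_mono bt_le1 b_nonneg) simp
  finally show ?thesis by simp
qed

lemma b_mono: assumes "m \<ge> 1" "m \<le> n" shows "b n j \<le> b m j"
  using assms(2)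
proof (induction n rule: dec_induct)
  case base then show ?case by simp
next
  case (step n) then show ?case using b_mono_Suc[of n j] assms(1) by simp
qed

lemma bt_split: "m \<ge> 1 \<Longrightarrow> n \<ge> 1 \<Longrightarrow> bt (m + n) \<le> bt m * bt n"
  unfolding bt_def[of "m+n"]
proof (rule Max.boundedI)
  fix x assume "m \<ge> 1" "n \<ge> 1" "x \<in> range (b (m + n))"
  then obtain j where "x = b (m+n) j" by auto
  then show "x \<le> bt m * bt n" using split[of m n j] \<open>m \<ge> 1\<close> \<open>n \<ge> 1\<close>
    by (meson b_le_bt bt_nonneg mult_right_mono order.trans)
qed auto

lemma bt_mono: "m \<ge> 1 \<Longrightarrow> m \<le> n \<Longrightarrow> bt n \<le> bt m"
  unfolding bt_def[of n]
  by (rule Max.boundedI) (auto intro: order.trans[OF b_mono b_le_bt])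

definition pmin where "pmin = Min (range (\<lambda>j. p$j))"

lemma pmin_pos: "pmin > 0"
  unfolding pmin_def by (subst Min_gr_iff) (auto intro: ppos)

lemma pmin_le: "pmin \<le> p$j"
  unfolding pmin_def by (rule Min_le) auto

lemma ap_le_bt: "n \<ge> 1 \<Longrightarrow> ap n \<le> bt n"
proof -
  assume n: "n \<ge> 1"
  have "ap n \<le> (\<Sum>j\<in>UNIV. p$j * bt n)"
    unfolding ap_b[OF n] by (intro sum_mono mult_left_mono b_le_bt pnn)
  also have "\<dots> = bt n" by (simp add: sum_distrib_right[symmetric] psum)
  finally show ?thesis .
qed

lemma bt_le_ap: "n \<ge> 1 \<Longrightarrow> pmin * bt n \<le> ap n"
proof -
  assume n: "n \<ge> 1"
  have "bt n \<in> range (b n)" unfolding bt_def by (rule Max_in) auto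
  then obtain l where l: "bt n = b n l" by auto
  have "pmin * bt n \<le> p$l * b n l" unfolding l
    by (intro mult_right_mono pmin_le b_nonneg)
  also have "\<dots> \<le> (\<Sum>j\<in>UNIV. p$j * b n j)"
    by (rule member_le_sum) (auto intro: mult_nonneg_nonneg pnn b_nonneg)
  finally show ?thesis using ap_b[OF n] by simp
qed

lemma ap_submult: "m \<ge> 1 \<Longrightarrow> n \<ge> 1 \<Longrightarrow> pmin * ap (m + n) \<le> ap m * ap n"
proof -
  assume m: "m \<ge> 1" and n: "n \<ge> 1"
  have "ap (m + n) = (\<Sum>j\<in>UNIV. p$j * b (m+n) j)" using ap_b m by simp
  also have "\<dots> \<le> (\<Sum>j\<in>UNIV. p$j * (b m j * bt n))"
    by (intro sum_mono mult_left_mono split m n pnn)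
  also have "\<dots> = ap m * bt n" by (simp add: ap_b[OF m] sum_distrib_right mult.assoc)
  finally have "pmin * ap (m+n) \<le> pmin * (ap m * bt n)"
    using pmin_pos by (intro mult_left_mono) auto
  also have "\<dots> = ap m * (pmin * bt n)" by (simp add: algebra_simps)
  also have "\<dots> \<le> ap m * ap n"
  proof (rule mult_left_mono[OF bt_le_ap[OF n]])
    show "0 \<le> ap m" using ap_b[OF m] by (simp add: sum_nonneg mult_nonneg_nonneg pnn b_nonneg)
  qed
  finally show ?thesis .
qed

end

context mk begin

lemma has_succ: "\<exists>l. A$j$l = 1"
proof -
  obtain k where k: "k \<ge> 1" "(mpow A k)$j$j > 0" using irr unfolding irreducible_matrix_def by blast
  then obtain \<pi> where \<pi>: "length \<pi> = Suc k" "hd \<pi> = j" "valid \<pi>" using path_exists by blast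
  then have "A$(\<pi>!0)$(\<pi>!Suc 0) = 1" using k(1) unfolding valid_def by auto
  moreover have "\<pi>!0 = j" using \<pi> by (metis hd_conv_nth list.size(3) nat.distinct(1))
  ultimately show ?thesis by auto
qed

definition sc :: "'n \<Rightarrow> 'n" where "sc j = (SOME l. A$j$l = 1)"

lemma sc_A: "A$j$(sc j) = 1"
  unfolding sc_def using has_succ by (rule someI_ex)

lemma extend:
  assumes v: "valid w" and ne: "w \<noteq> []"
  shows "\<exists>x\<in>SFT A. \<forall>k<length w. x k = w!k"
proof -
  define x where "x n = (if n < length w then w!n else (sc ^^ (n - (length w - 1))) (last w))" for n
  have "x \<in> SFT A" unfolding SFT_def
  proof (intro CollectI allI)
    fix k
    consider "Suc k < length w" | "Suc k = length w" | "Suc k > length w" by linarith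
    then show "A$(x k)$(x (Suc k)) = 1"
    proof cases
      case 1 then show ?thesis using v unfolding valid_def x_def by auto
    next
      case 2
      then have kk: "k = length w - 1" by simp
      then have "x k = last w" using ne 2 unfolding x_def by (simp add: last_conv_nth)
      moreover have "x (Suc k) = sc (last w)" using 2 unfolding x_def by simp
      ultimately show ?thesis using sc_A by simp
    next
      case 3
      then have e: "Suc k - (length w - 1) = Suc (k - (length w - 1))" by simp
      have "x (Suc k) = sc (x k)" using 3 unfolding x_def by (simp only: e) simp
      then show ?thesis using sc_A by simp
    qed
  qed
  moreover have "\<forall>k<length w. x k = w!k" unfolding x_def by simp
  ultimately show ?thesis by blast
qed

lemma shift_SFT: "x \<in> SFT A \<Longrightarrow> shift_pow i x \<in> SFT A"
  unfolding SFT_def shift_pow_def by simp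

definition L where "L = Max (length ` G)"

lemma G_ne_word: "u \<in> G \<Longrightarrow> u \<noteq> []" using iin by auto

lemma len_le_L: "u \<in> G \<Longrightarrow> length u \<le> L"
  unfolding L_def using finG by (intro Max_ge) auto

lemma L_pos: "L \<ge> 1"
proof -
  obtain u where "u \<in> G" using neG by auto
  then show ?thesis using len_le_L G_ne_word[of u] by (metis One_nat_def Suc_leI le_trans length_greater_0_conv)
qed

lemma mc_nonneg: "markov_cyl P p w \<ge> 0"
  by (cases "w = []") (auto simp: markov_cyl_pw intro: mult_nonneg_nonneg pnn pw_nonneg, simp add: markov_cyl_def)

lemma surv_eq: "survival_prob A P p G m
   = (\<Sum>w\<in>{w. length w = m + L \<and> cylinder A w \<subseteq> survivors A (hole A G) m}. markov_cyl P p w)"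
  unfolding survival_prob_def markov_meas_fin_def L_def by simp

lemma noocc_surv:
  assumes w: "length w = m + L" "\<not> occ G w"
  shows "cylinder A w \<subseteq> survivors A (hole A G) m"
proof
  fix x assume x: "x \<in> cylinder A w"
  have xs: "x \<in> SFT A" and xw: "\<forall>k<length w. x k = w!k" using x by (auto simp: cylinder_def)
  have "shift_pow i x \<notin> hole A G" if i: "i \<le> m" for i
  proof
    assume "shift_pow i x \<in> hole A G"
    then obtain u where u: "u \<in> G" "shift_pow i x \<in> cylinder A u" by (auto simp: hole_def)
    have xu: "\<forall>k<length u. x (k + i) = u!k" using u(2) by (auto simp: cylinder_def shift_pow_def)
    have lu: "i + length u \<le> length w" using len_le_L[OF u(1)] i w(1) by simp
    have "u = take (length u) (drop i w)"
    proof (rule nth_equalityI)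
      show "length u = length (take (length u) (drop i w))" using lu by simp
      fix k assume "k < length u"
      then have "u!k = w!(k+i)" using xu xw lu by simp
      then show "u!k = take (length u) (drop i w) ! k"
        using \<open>k < length u\<close> lu by (simp add: add.commute)
    qed
    then have "w = take i w @ u @ drop (length u) (drop i w)"
      by (metis append_take_drop_id)
    then show False using w(2) u(1) unfolding occ_def by blast
  qed
  then show "x \<in> survivors A (hole A G) m" using xs by (simp add: survivors_def)
qed

lemma S1: "ap (m + L) \<le> survival_prob A P p G m"
proof -
  have sub: "{w. length w = m + L \<and> \<not> occ G w} \<subseteq> {w. length w = m + L \<and> cylinder A w \<subseteq> survivors A (hole A G) m}"
    using noocc_surv by blast
  show ?thesis unfolding surv_eq ap_def
    by (rule sum_mono2[OF _ sub]) (auto intro: finite_len_P mc_nonneg)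
qed

lemma surv_noocc:
  assumes w: "length w = m + L" "valid w" "cylinder A w \<subseteq> survivors A (hole A G) m"
  shows "\<not> occ G (take (Suc m) w)"
proof
  assume "occ G (take (Suc m) w)"
  then obtain u xs ys where u: "u \<in> G" "take (Suc m) w = xs @ u @ ys" unfolding occ_def by blast
  have ne: "w \<noteq> []" using w(1) L_pos by auto
  obtain x where x: "x \<in> SFT A" "\<forall>k<length w. x k = w!k" using extend[OF w(2) ne] by blast
  then have "x \<in> cylinder A w" by (simp add: cylinder_def)
  then have xs: "x \<in> survivors A (hole A G) m" using w(3) by blast
  define i where "i = length xs"
  have "length (take (Suc m) w) = Suc m" using w(1) L_pos by simp
  then have "length (xs @ u @ ys) = Suc m" using u(2) by simp
  then have lt: "i + length u \<le> Suc m" unfolding i_def by simp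
  have "i \<le> m" using lt G_ne_word[OF u(1)] by (cases u) auto
  moreover have "shift_pow i x \<in> cylinder A u"
  proof -
    have "\<forall>k<length u. shift_pow i x k = u!k"
    proof (intro allI impI)
      fix k assume k: "k < length u"
      have "k + i < length w" using lt k w(1) L_pos by linarith
      then have "shift_pow i x k = w!(k+i)" using x(2) by (simp add: shift_pow_def)
      also have "\<dots> = take (Suc m) w ! (i + k)" using lt k by (simp add: add.commute)
      also have "\<dots> = u!k" using u(2) k by (simp add: i_def nth_append)
      finally show "shift_pow i x k = u!k" .
    qed
    then show ?thesis using shift_SFT[OF x(1)] by (simp add: cylinder_def)
  qed
  ultimately show False using xs u(1) by (auto simp: survivors_def hole_def)
qed

lemma marg:
  assumes n: "n \<ge> 1"
  shows "(\<Sum>w\<in>{w. length w = n + k \<and> Q (take n w)}. markov_cyl P p w)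
       = (\<Sum>v\<in>{v. length v = n \<and> Q v}. markov_cyl P p v)"
proof (induction k)
  case 0 then show ?case by (intro sum.cong) auto
next
  case (Suc k)
  have "(\<Sum>w\<in>{w. length w = n + Suc k \<and> Q (take n w)}. markov_cyl P p w)
      = (\<Sum>w\<in>{w. length w = Suc (n + k) \<and> Q (take n w)}. markov_cyl P p w)" by simp
  also have "\<dots> = (\<Sum>v\<in>{v. length v = n + k \<and> Q (take n v)}. \<Sum>l\<in>UNIV. markov_cyl P p (v @ [l]))"
    by (rule sum_snoc) simp
  also have "\<dots> = (\<Sum>v\<in>{v. length v = n + k \<and> Q (take n v)}. markov_cyl P p v)"
  proof (intro sum.cong refl)
    fix v assume "v \<in> {v. length v = n + k \<and> Q (take n v)}"
    then have ne: "v \<noteq> []" using n by auto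
    have "(\<Sum>l\<in>UNIV. markov_cyl P p (v @ [l])) = (\<Sum>l\<in>UNIV. p$(hd v) * pw P v * P$(last v)$l)"
      using ne by (intro sum.cong refl) (simp add: markov_cyl_pw pw_snoc hd_append mult.assoc)
    also have "\<dots> = p$(hd v) * pw P v" by (simp add: sum_distrib_left[symmetric] Psum)
    finally show "(\<Sum>l\<in>UNIV. markov_cyl P p (v @ [l])) = markov_cyl P p v"
      using ne by (simp add: markov_cyl_pw)
  qed
  finally show ?case using Suc.IH by simp
qed

lemma S2: "survival_prob A P p G m \<le> ap (Suc m)"
proof -
  let ?X = "{w. length w = m + L \<and> cylinder A w \<subseteq> survivors A (hole A G) m}"
  let ?Y = "{w. length w = m + L \<and> \<not> occ G (take (Suc m) w)}"
  have fX: "finite ?X" and fY: "finite ?Y" by (auto intro: finite_len_P)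
  have "survival_prob A P p G m = (\<Sum>w\<in>?X \<inter> ?Y. markov_cyl P p w) + (\<Sum>w\<in>?X - ?Y. markov_cyl P p w)"
    unfolding surv_eq by (rule sum.Int_Diff[OF fX])
  also have "(\<Sum>w\<in>?X - ?Y. markov_cyl P p w) = 0"
  proof (rule sum.neutral, intro ballI)
    fix w assume w: "w \<in> ?X - ?Y"
    have "\<not> valid w" using surv_noocc w by blast
    moreover have "w \<noteq> []" using w L_pos by auto
    ultimately show "markov_cyl P p w = 0" by (simp add: markov_cyl_pw pw_zero)
  qed
  also have "(\<Sum>w\<in>?X \<inter> ?Y. markov_cyl P p w) \<le> (\<Sum>w\<in>?Y. markov_cyl P p w)"
    by (rule sum_mono2[OF fY]) (auto intro: mc_nonneg)
  also have "(\<Sum>w\<in>?Y. markov_cyl P p w) = ap (Suc m)"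
  proof -
    have e: "m + L = Suc m + (L - 1)" using L_pos by simp
    show ?thesis unfolding e ap_def by (rule marg) simp
  qed
  finally show ?thesis by simp
qed

end

context mk begin

lemma allowed_valid: "allowed_word A w \<Longrightarrow> valid w"
proof -
  assume "allowed_word A w"
  then obtain x m where x: "\<forall>k. A$(x k)$(x (Suc k)) = 1" "\<forall>k<length w. x (m + k) = w!k"
    unfolding allowed_word_def SFT_def by blast
  show "valid w" unfolding valid_def
  proof (intro allI impI)
    fix k assume k: "Suc k < length w"
    have "w!k = x (m + k)" "w!Suc k = x (Suc (m + k))" using x(2) k by auto
    then show "A$(w!k)$(w!Suc k) = 1" using x(1) by simp
  qed
qed

lemma bad_word: "\<exists>T\<ge>1. b T l < 1"
proof -
  obtain w0 where w0: "w0 \<in> G" using neG by auto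
  have v0: "valid w0" using allowed_valid allw w0 by blast
  have ne0: "w0 \<noteq> []" using G_ne_word[OF w0] .
  obtain k where k: "k \<ge> 1" "(mpow A k)$l$(hd w0) > 0" using irr unfolding irreducible_matrix_def by blast
  then obtain \<pi> where \<pi>: "length \<pi> = Suc k" "hd \<pi> = l" "last \<pi> = hd w0" "valid \<pi>"
    using path_exists by blast
  have pne: "\<pi> \<noteq> []" using \<pi> by auto
  define ws where "ws = \<pi> @ tl w0"
  have occ: "occ G ws"
  proof -
    have "ws = (butlast \<pi> @ [last \<pi>]) @ tl w0" unfolding ws_def using pne by simp
    also have "\<dots> = butlast \<pi> @ w0 @ []" using \<pi>(3) ne0 by simp
    finally have "ws = butlast \<pi> @ w0 @ []" .
    then show ?thesis using w0 unfolding occ_def by blast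
  qed
  have pos: "pw P ws > 0"
  proof (cases "tl w0 = []")
    case True then show ?thesis using pw_pos[OF \<pi>(4)] by (simp add: ws_def)
  next
    case False
    have c: "hd w0 # tl w0 = w0" using ne0 by simp
    have e: "pw P w0 = P$(hd w0)$(hd (tl w0)) * pw P (tl w0)"
      using pw_cons[OF False, where a="hd w0" and P=P] unfolding c .
    have "pw P ws = pw P \<pi> * (P$(last \<pi>)$(hd (tl w0)) * pw P (tl w0))"
      unfolding ws_def using pw_append[OF pne False] by simp
    also have "\<dots> = pw P \<pi> * pw P w0" using e \<pi>(3) by simp
    finally show ?thesis using pw_pos[OF \<pi>(4)] pw_pos[OF v0] by simp
  qed
  define T where "T = length ws"
  have T1: "T \<ge> 1" using pne by (simp add: T_def ws_def Suc_le_eq)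
  have hws: "hd ws = l" using \<pi> pne by (simp add: ws_def)
  let ?S = "{w. length w = T \<and> hd w = l}"
  have fS: "finite ?S" by (rule finite_len_P)
  have wsS: "ws \<in> ?S" using hws by (simp add: T_def)
  have "b T l \<le> (\<Sum>w\<in>?S - {ws}. pw P w)"
    unfolding b_def by (rule sum_mono2) (use occ fS in \<open>auto intro: pw_nonneg\<close>)
  also have "\<dots> = 1 - pw P ws" using sum_diff1[OF fS, of "pw P" ws] wsS tot[OF T1] by simp
  finally show ?thesis using pos T1 by (intro exI[of _ T]) auto
qed

lemma bt_pow: assumes T1: "T \<ge> 1" shows "k \<ge> 1 \<Longrightarrow> bt (k * T) \<le> bt T ^ k"
proof (induction k rule: nat_induct_at_least)
  case base then show ?case by simp
next
  case (Suc k)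
  have "bt (Suc k * T) = bt (k * T + T)" by (simp add: add.commute)
  also have "\<dots> \<le> bt (k*T) * bt T" using bt_split[of "k*T" T] Suc T1 by simp
  also have "\<dots> \<le> bt T ^ k * bt T" using Suc by (intro mult_right_mono bt_nonneg) auto
  finally show ?case by (simp add: mult.commute)
qed

lemma ap_small: "\<exists>n\<ge>1. ap n < pmin"
proof -
  obtain Tf where Tf: "\<And>l. Tf l \<ge> 1 \<and> b (Tf l) l < 1" using bad_word by metis
  define T where "T = Max (range Tf)"
  have T1: "T \<ge> 1" unfolding T_def using Tf by (meson Max_ge UNIV_I finite finite_imageI image_eqI order.trans)
  have "b T l < 1" for l
  proof -
    have "Tf l \<le> T" unfolding T_def by (rule Max_ge) auto
    then have "b T l \<le> b (Tf l) l" using Tf by (intro b_mono) auto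
    then show ?thesis using Tf[of l] by simp
  qed
  moreover have "bt T \<in> range (b T)" unfolding bt_def by (rule Max_in) auto
  ultimately have btT: "bt T < 1" by auto
  obtain k where k: "bt T ^ k < pmin" using real_arch_pow_inv[OF pmin_pos btT] by blast
  have "bt T ^ Suc k \<le> bt T ^ k" using btT bt_nonneg by (simp add: mult_left_le_one_le)
  then have k': "bt T ^ Suc k < pmin" using k by simp
  have "ap (Suc k * T) \<le> bt (Suc k * T)" using T1 by (intro ap_le_bt) simp
  also have "\<dots> \<le> bt T ^ Suc k" using T1 by (intro bt_pow) auto
  finally have "ap (Suc k * T) < pmin" using k' by simp
  moreover have "Suc k * T \<ge> 1" using T1 by simp
  ultimately show ?thesis by blast
qed

definition Tn :: "nat \<Rightarrow> ('n \<Rightarrow> real) \<Rightarrow> 'n \<Rightarrow> real" where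
  "Tn n f j = (\<Sum>w\<in>{w. length w = Suc n \<and> hd w = j \<and> i0 \<notin> set w}. pw P w * f (last w))"

lemma Tn_0: "j \<noteq> i0 \<Longrightarrow> Tn 0 f j = f j"
proof -
  assume j: "j \<noteq> i0"
  have "{w. length w = Suc 0 \<and> hd w = j \<and> i0 \<notin> set w} = {[j]}"
    using j by (auto simp: length_Suc_conv)
  then show ?thesis by (simp add: Tn_def)
qed

lemma Tn_i0: "Tn n f i0 = 0"
proof -
  have "\<And>w. length w = Suc n \<Longrightarrow> hd w \<in> set w"
    by (metis hd_in_set list.size(3) nat.distinct(1))
  then have e: "{w. length w = Suc n \<and> hd w = i0 \<and> i0 \<notin> set w} = {}" by blast
  show ?thesis unfolding Tn_def e by simp
qed

lemma Tn_Suc: "j \<noteq> i0 \<Longrightarrow> Tn (Suc n) f j = (\<Sum>l\<in>UNIV. P$j$l * Tn n f l)"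
proof -
  assume j: "j \<noteq> i0"
  let ?W = "{w'. length w' = Suc n \<and> i0 \<notin> set w'}"
  have e: "{w. length w = Suc (Suc n) \<and> hd w = j \<and> i0 \<notin> set w} = (\<lambda>w'. j # w') ` ?W"
    using j by (auto simp: length_Suc_conv)
  have "Tn (Suc n) f j = (\<Sum>w'\<in>?W. pw P (j # w') * f (last (j # w')))"
    unfolding Tn_def e by (subst sum.reindex) (auto simp: inj_on_def)
  also have "\<dots> = (\<Sum>w'\<in>?W. P$j$(hd w') * (pw P w' * f (last w')))"
    by (intro sum.cong refl) (auto simp: pw_cons)
  also have "\<dots> = (\<Sum>l\<in>UNIV. \<Sum>w'\<in>{w'. w' \<in> ?W \<and> hd w' = l}. P$j$(hd w') * (pw P w' * f (last w')))"
    by (rule sum.group[symmetric]) (auto intro: finite_len_P)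
  also have "\<dots> = (\<Sum>l\<in>UNIV. P$j$l * Tn n f l)"
    unfolding Tn_def sum_distrib_left
    by (intro sum.cong refl) (auto intro!: sum.cong)
  finally show ?thesis .
qed

lemma Tn_mono: "(\<And>l. f l \<le> g l) \<Longrightarrow> Tn n f j \<le> Tn n g j"
  unfolding Tn_def by (intro sum_mono mult_left_mono pw_nonneg) auto

lemma Tn_lower:
  assumes th: "\<theta> \<ge> 0"
    and H: "\<And>j. j \<noteq> i0 \<Longrightarrow> \<theta> * h j \<le> (\<Sum>l\<in>UNIV. if l = i0 then 0 else P$j$l * h l)"
  shows "j \<noteq> i0 \<Longrightarrow> \<theta> ^ n * h j \<le> Tn n h j"
proof (induction n arbitrary: j)
  case 0 then show ?case by (simp add: Tn_0)
next
  case (Suc n)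
  have "\<theta> ^ Suc n * h j = \<theta>^n * (\<theta> * h j)" by simp
  also have "\<dots> \<le> \<theta>^n * (\<Sum>l\<in>UNIV. if l = i0 then 0 else P$j$l * h l)"
    using H[OF Suc.prems] th by (intro mult_left_mono) auto
  also have "\<dots> = (\<Sum>l\<in>UNIV. if l = i0 then 0 else P$j$l * (\<theta>^n * h l))"
    by (simp add: sum_distrib_left if_distrib mult.left_commute cong: if_cong)
  also have "\<dots> \<le> (\<Sum>l\<in>UNIV. P$j$l * Tn n h l)"
  proof (intro sum_mono)
    fix l show "(if l = i0 then 0 else P$j$l * (\<theta>^n * h l)) \<le> P$j$l * Tn n h l"
      using Suc.IH[of l] by (auto simp: Tn_i0 intro: mult_left_mono Pnn)
  qed
  also have "\<dots> = Tn (Suc n) h j" using Tn_Suc[OF Suc.prems] by simp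
  finally show ?case .
qed

lemma ap_ge_Tn: "p$j * Tn n (\<lambda>_. 1) j \<le> ap (Suc n)"
proof -
  let ?S = "{w. length w = Suc n \<and> hd w = j \<and> i0 \<notin> set w}"
  have sub: "?S \<subseteq> {w. length w = Suc n \<and> \<not> occ G w}"
    using iin unfolding occ_def by fastforce
  have "p$j * Tn n (\<lambda>_. 1) j = (\<Sum>w\<in>?S. markov_cyl P p w)"
    unfolding Tn_def sum_distrib_left
  proof (intro sum.cong refl)
    fix w assume "w \<in> ?S"
    then have "w \<noteq> []" "hd w = j" by auto
    then show "p$j * (pw P w * 1) = markov_cyl P p w" by (simp add: markov_cyl_pw)
  qed
  also have "\<dots> \<le> ap (Suc n)" unfolding ap_def
    by (rule sum_mono2[OF _ sub]) (auto intro: finite_len_P mc_nonneg)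
  finally show ?thesis .
qed

lemma ap_lower:
  assumes th: "\<theta> \<ge> 0"
    and H: "\<And>j. j \<noteq> i0 \<Longrightarrow> \<theta> * h j \<le> (\<Sum>l\<in>UNIV. if l = i0 then 0 else P$j$l * h l)"
    and j0: "h j0 > 0" "j0 \<noteq> i0" and M: "\<And>l. h l \<le> M"
  shows "p$j0 * h j0 / M * \<theta> ^ n \<le> ap (Suc n)"
proof -
  have Mpos: "M > 0" using M[of j0] j0 by simp
  have "\<theta> ^ n * h j0 \<le> Tn n h j0" by (rule Tn_lower[OF th H j0(2)])
  also have "\<dots> \<le> Tn n (\<lambda>_. M) j0" by (rule Tn_mono) (rule M)
  also have "\<dots> = M * Tn n (\<lambda>_. 1) j0" by (simp add: Tn_def sum_distrib_left mult.commute)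
  finally have "\<theta> ^ n * h j0 / M \<le> Tn n (\<lambda>_. 1) j0" using Mpos by (simp add: divide_le_eq mult.commute)
  then have "p$j0 * (\<theta> ^ n * h j0 / M) \<le> p$j0 * Tn n (\<lambda>_. 1) j0" by (intro mult_left_mono pnn)
  also have "\<dots> \<le> ap (Suc n)" by (rule ap_ge_Tn)
  finally show ?thesis by (simp add: field_simps)
qed

end

context mk begin

lemma eig_fun:
  assumes "P *v v = \<theta> *s v"
  shows "\<And>j. (\<Sum>l\<in>UNIV. P$j$l * v$l) = \<theta> * v$j"
  using assms by (simp add: vec_eq_iff matrix_vector_mult_def)

lemma theta_le1:
  assumes e: "\<And>j. (\<Sum>l\<in>UNIV. P$j$l * u l) = \<theta> * u j" and nz: "u k0 \<noteq> 0" and th: "\<theta> > 0"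
  shows "\<theta> \<le> 1"
proof -
  have "Max (range (\<lambda>l. \<bar>u l\<bar>)) \<in> range (\<lambda>l. \<bar>u l\<bar>)" by (rule Max_in) auto
  then obtain k where k: "Max (range (\<lambda>l. \<bar>u l\<bar>)) = \<bar>u k\<bar>" by (rule rangeE)
  have kmax: "\<bar>u l\<bar> \<le> \<bar>u k\<bar>" for l unfolding k[symmetric] by (rule Max_ge) auto
  have kpos: "\<bar>u k\<bar> > 0" using kmax[of k0] nz by simp
  have "\<theta> * \<bar>u k\<bar> = \<bar>\<Sum>l\<in>UNIV. P$k$l * u l\<bar>" using e[of k] th by (simp add: abs_mult)
  also have "\<dots> \<le> (\<Sum>l\<in>UNIV. \<bar>P$k$l * u l\<bar>)" by (rule sum_abs)
  also have "\<dots> \<le> (\<Sum>l\<in>UNIV. P$k$l * \<bar>u k\<bar>)"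
    by (intro sum_mono) (simp add: abs_mult Pnn mult_left_mono kmax)
  also have "\<dots> = \<bar>u k\<bar>" by (simp add: sum_distrib_right[symmetric] Psum)
  finally show ?thesis using kpos by simp
qed

lemma neg_has_bigger:
  assumes e: "\<And>j. (\<Sum>l\<in>UNIV. P$j$l * u l) = \<theta> * u j" and th: "\<theta> < 1" and neg: "u i0 < 0"
  shows "\<exists>j. u j > u i0"
proof (rule ccontr)
  assume "\<not> ?thesis"
  then have le: "\<And>l. u l \<le> u i0" by (meson not_le)
  have "\<theta> * u i0 = (\<Sum>l\<in>UNIV. P$i0$l * u l)" using e[of i0] by simp
  also have "\<dots> \<le> (\<Sum>l\<in>UNIV. P$i0$l * u i0)" by (intro sum_mono mult_left_mono le Pnn)
  also have "\<dots> = u i0" by (simp add: sum_distrib_right[symmetric] Psum)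
  finally have "\<theta> * u i0 \<le> 1 * u i0" by simp
  then have "\<theta> \<ge> 1" using neg by (simp add: mult_le_cancel_right)
  then show False using th by simp
qed

lemma h_from_u:
  assumes e: "\<And>j. (\<Sum>l\<in>UNIV. P$j$l * u l) = \<theta> * u j" and th: "\<theta> < 1"
    and ui: "u i0 \<le> 0" and j0: "u j0 > u i0"
  shows "\<exists>h j0 M. (\<forall>j. j \<noteq> i0 \<longrightarrow> \<theta> * h j \<le> (\<Sum>l\<in>UNIV. if l = i0 then 0 else P$j$l * h l))
                \<and> h j0 > 0 \<and> j0 \<noteq> i0 \<and> (\<forall>l. h l \<le> M)"
proof -
  define h where "h l = u l - u i0" for l
  have H: "\<theta> * h j \<le> (\<Sum>l\<in>UNIV. if l = i0 then 0 else P$j$l * h l)" for j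
  proof -
    have "(\<Sum>l\<in>UNIV. if l = i0 then 0 else P$j$l * h l) = (\<Sum>l\<in>UNIV. P$j$l * h l)"
      by (intro sum.cong refl) (simp add: h_def)
    also have "\<dots> = (\<Sum>l\<in>UNIV. P$j$l * u l) - (\<Sum>l\<in>UNIV. P$j$l) * u i0"
      by (simp add: h_def right_diff_distrib sum_subtractf sum_distrib_right)
    also have "\<dots> = \<theta> * h j + (\<theta> - 1) * u i0" using e[of j] by (simp add: Psum h_def algebra_simps)
    finally show ?thesis using th ui by (simp add: mult_nonpos_nonpos)
  qed
  have "h j0 > 0" "j0 \<noteq> i0" using j0 by (auto simp: h_def)
  moreover have "\<forall>l. h l \<le> Max (range h)" by auto
  ultimately show ?thesis using H by blast
qed

lemma get_h:
  assumes ev: "real_eigenvalue P \<theta>" and th0: "\<theta> > 0" and th1: "\<theta> \<noteq> 1"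
  shows "\<theta> < 1 \<and> (\<exists>h j0 M. (\<forall>j. j \<noteq> i0 \<longrightarrow> \<theta> * h j \<le> (\<Sum>l\<in>UNIV. if l = i0 then 0 else P$j$l * h l))
                \<and> h j0 > 0 \<and> j0 \<noteq> i0 \<and> (\<forall>l. h l \<le> M))"
proof -
  obtain v where v: "v \<noteq> 0" "P *v v = \<theta> *s v" using ev unfolding real_eigenvalue_def by blast
  define u where "u l = v$l" for l
  have e: "\<And>j. (\<Sum>l\<in>UNIV. P$j$l * u l) = \<theta> * u j" unfolding u_def by (rule eig_fun[OF v(2)])
  have en: "\<And>j. (\<Sum>l\<in>UNIV. P$j$l * (- u l)) = \<theta> * (- u j)"
    using e by (simp add: sum_negf)
  obtain k0 where k0: "u k0 \<noteq> 0" using v(1) unfolding u_def by (metis vec_eq_iff zero_index)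
  have th: "\<theta> < 1" using theta_le1[OF e k0 th0] th1 by simp
  have "\<exists>w. (\<forall>j. (\<Sum>l\<in>UNIV. P$j$l * w l) = \<theta> * w j) \<and> w i0 \<le> 0 \<and> (\<exists>j. w j > w i0)"
  proof (cases "u i0 < 0")
    case True then show ?thesis using neg_has_bigger[OF e th True] e by (intro exI[of _ u]) auto
  next
    case False
    show ?thesis
    proof (cases "u i0 > 0")
      case True
      then have "- u i0 < 0" by simp
      then show ?thesis using neg_has_bigger[of "\<lambda>l. - u l", OF en th] en
        by (intro exI[of _ "\<lambda>l. - u l"]) auto
    next
      case False2: False
      then have z: "u i0 = 0" using False by simp
      show ?thesis
      proof (cases "u k0 > 0")
        case True then show ?thesis using e z by (intro exI[of _ u]) auto
      next
        case False
        then have "- u k0 > 0" using k0 by simp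
        then show ?thesis using en z by (intro exI[of _ "\<lambda>l. - u l"]) auto
      qed
    qed
  qed
  then obtain w j0 where w: "\<And>j. (\<Sum>l\<in>UNIV. P$j$l * w l) = \<theta> * w j" "w i0 \<le> 0" "w j0 > w i0" by blast
  show ?thesis using h_from_u[OF w(1) th w(2) w(3)] th by blast
qed

end

lemma superadd_mult:
  fixes F :: "nat \<Rightarrow> real"
  assumes sa: "\<And>m n. m \<ge> 1 \<Longrightarrow> n \<ge> 1 \<Longrightarrow> F (m + n) \<ge> F m + F n"
    and k: "k \<ge> 1"
  shows "q \<ge> 1 \<Longrightarrow> F (q * k) \<ge> real q * F k"
proof (induction q rule: nat_induct_at_least)
  case base then show ?case by simp
next
  case (Suc q)
  have "F (Suc q * k) = F (q * k + k)" by (simp add: add.commute)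
  also have "\<dots> \<ge> F (q*k) + F k" using sa[of "q*k" k] Suc k by simp
  finally show ?case using Suc by (simp add: algebra_simps)
qed

lemma fekete:
  fixes F :: "nat \<Rightarrow> real"
  assumes sa: "\<And>m n. m \<ge> 1 \<Longrightarrow> n \<ge> 1 \<Longrightarrow> F (m + n) \<ge> F m + F n"
    and bd: "\<And>n. n \<ge> 1 \<Longrightarrow> F n \<le> \<alpha> + \<beta> * real n"
  shows "\<exists>l. (\<lambda>n. F n / real n) \<longlonglongrightarrow> l \<and> (\<forall>n\<ge>1. F n / real n \<le> l)"
proof -
  define S where "S = (\<lambda>n. F n / real n) ` {1..}"
  have bdS: "\<And>x. x \<in> S \<Longrightarrow> x \<le> \<bar>\<alpha>\<bar> + \<beta>"
  proof -
    fix x assume "x \<in> S"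
    then obtain n where n: "n \<ge> 1" "x = F n / real n" by (auto simp: S_def)
    have "F n / real n \<le> (\<alpha> + \<beta> * real n) / real n"
      using bd[OF n(1)] n(1) by (simp add: divide_right_mono)
    also have "\<dots> = \<alpha> / real n + \<beta>" using n(1) by (simp add: field_simps)
    also have "\<dots> \<le> \<bar>\<alpha>\<bar> + \<beta>"
    proof -
      have "\<alpha> / real n \<le> \<bar>\<alpha>\<bar> / real n" by (simp add: divide_right_mono)
      also have "\<dots> \<le> \<bar>\<alpha>\<bar>" using n(1) by (simp add: divide_le_eq mult_le_cancel_left1 less_le_trans)
      finally show ?thesis by simp
    qed
    finally show "x \<le> \<bar>\<alpha>\<bar> + \<beta>" using n by simp
  qed
  have Sne: "S \<noteq> {}" by (auto simp: S_def)
  have bddS: "bdd_above S" using bdS by (auto simp: bdd_above_def)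
  define l where "l = Sup S"
  have le: "\<And>n. n \<ge> 1 \<Longrightarrow> F n / real n \<le> l"
    unfolding l_def by (rule cSup_upper[OF _ bddS]) (auto simp: S_def)
  have "(\<lambda>n. F n / real n) \<longlonglongrightarrow> l"
    unfolding lim_sequentially
  proof (intro allI impI)
    fix e :: real assume e: "e > 0"
    have "\<exists>x\<in>S. l - e/2 < x" unfolding l_def
      using less_cSup_iff[OF Sne bddS, of "Sup S - e/2"] e by auto
    then obtain k where k: "k \<ge> 1" "F k / real k > l - e/2" by (auto simp: S_def)
    define m0 where "m0 = min 0 (Min (F ` {1..<k}))"
    have m0: "\<And>r. 1 \<le> r \<Longrightarrow> r < k \<Longrightarrow> m0 \<le> F r"
      unfolding m0_def by (simp add: min.coboundedI2)
    have m00: "m0 \<le> 0" by (simp add: m0_def)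
    define D where "D = \<bar>F k\<bar> - m0"
    have D: "D \<ge> 0" using m00 by (simp add: D_def)
    obtain N :: nat where N: "N > 2 * D / e" using reals_Archimedean2 by blast
    show "\<exists>no. \<forall>n\<ge>no. dist (F n / real n) l < e"
    proof (intro exI[of _ "max k (Suc N)"] allI impI)
      fix n assume n: "n \<ge> max k (Suc N)"
      have n1: "n \<ge> 1" "n \<ge> k" using n k by auto
      define q where "q = n div k"
      define r where "r = n mod k"
      have nqr: "n = q * k + r" by (simp add: q_def r_def)
      have q1: "q \<ge> 1" using n1 k unfolding q_def using div_le_mono[OF n1(2), of k] k by simp
      have rk: "r < k" using k by (simp add: r_def)
      have Fqk: "F (q*k) \<ge> real q * F k" using superadd_mult[of F k q] sa k q1 by blast
      have Fn: "F n \<ge> real q * F k + m0"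
      proof (cases "r = 0")
        case True then show ?thesis using Fqk nqr m00 by simp
      next
        case False
        have "F n \<ge> F (q*k) + F r" using sa[of "q*k" r] nqr q1 k False
          by (metis One_nat_def Suc_leI le_trans mult_le_mono neq0_conv nat_mult_1)
        then show ?thesis using Fqk m0[of r] False rk by linarith
      qed
      have "real q * F k \<ge> real n * (F k / real k) - \<bar>F k\<bar>"
      proof -
        have "real n * (F k / real k) = (real q + real r / real k) * F k"
          using nqr k by (simp add: field_simps)
        also have "\<dots> = real q * F k + (real r / real k) * F k" by (simp add: algebra_simps)
        also have "(real r / real k) * F k \<le> \<bar>F k\<bar>"
        proof -
          have "(real r / real k) * F k \<le> (real r / real k) * \<bar>F k\<bar>"
            by (intro mult_left_mono) auto
          also have "\<dots> \<le> 1 * \<bar>F k\<bar>" using rk by (intro mult_right_mono) auto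
          finally show ?thesis by simp
        qed
        finally show ?thesis by simp
      qed
      hence "F n \<ge> real n * (F k / real k) - D" using Fn by (simp add: D_def)
      hence "F n / real n \<ge> (real n * (F k / real k) - D) / real n" using n1
        by (simp add: divide_right_mono)
      also have "(real n * (F k / real k) - D) / real n = F k / real k - D / real n"
        using n1 by (simp add: field_simps)
      finally have "F n / real n \<ge> F k / real k - D / real n" .
      moreover have "D / real n < e/2"
      proof -
        have "real n > 2 * D / e" using N n by linarith
        then show ?thesis using e n1 by (simp add: field_simps)
      qed
      ultimately have "F n / real n > l - e" using k by linarith
      moreover have "F n / real n \<le> l" using le n1 by simp
      ultimately show "dist (F n / real n) l < e" by (simp add: dist_real_def)
    qed
  qed
  then show ?thesis using le by blast
qed

context mk begin

lemma main_limit: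
  assumes ev: "real_eigenvalue P \<theta>" and th0: "\<theta> > 0" and th1: "\<theta> \<noteq> 1"
  shows "\<exists>\<rho>. ((\<lambda>m. - ln (survival_prob A P p G m) / real m) \<longlonglongrightarrow> \<rho>)
             \<and> 0 < \<rho> \<and> \<rho> \<le> - ln \<theta>"
proof -
  obtain h j0 M where hyp: "\<forall>j. j \<noteq> i0 \<longrightarrow> \<theta> * h j \<le> (\<Sum>l\<in>UNIV. if l = i0 then 0 else P$j$l * h l)"
    and hj0: "h j0 > 0" "j0 \<noteq> i0" and hM: "\<forall>l. h l \<le> M" and th: "\<theta> < 1"
    using get_h[OF ev th0 th1] by blast
  define c where "c = p$j0 * h j0 / M"
  have Mpos: "M > 0" using hM hj0 by (meson less_le_trans)
  have cpos: "c > 0" unfolding c_def using ppos hj0 Mpos by simp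
  have low: "c * \<theta> ^ n \<le> ap (Suc n)" for n
    unfolding c_def by (rule ap_lower[of \<theta> h j0 M]) (use th0 hyp hj0 hM in auto)
  have appos: "ap n > 0" if n1: "n \<ge> 1" for n
  proof -
    obtain k where "n = Suc k" using n1 by (cases n) auto
    then show ?thesis using low[of k] cpos th0 by (smt (verit) zero_less_power mult_pos_pos)
  qed
  define f where "f n = - ln (ap n)" for n
  define F where "F n = f n + ln pmin" for n
  have sa: "F (m + n) \<ge> F m + F n" if "m \<ge> 1" "n \<ge> 1" for m n
  proof -
    have "pmin * ap (m+n) \<le> ap m * ap n" by (rule ap_submult[OF that])
    then have "ln (pmin * ap (m+n)) \<le> ln (ap m * ap n)"
      using pmin_pos appos[of "m+n"] appos[of m] appos[of n] that by (subst ln_le_cancel_iff) auto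
    then have "ln pmin + ln (ap (m+n)) \<le> ln (ap m) + ln (ap n)"
      using pmin_pos appos[of "m+n"] appos[of m] appos[of n] that by (simp add: ln_mult)
    then show ?thesis unfolding F_def f_def by simp
  qed
  define \<alpha> where "\<alpha> = - ln c + ln \<theta> + ln pmin"
  have bd: "F n \<le> \<alpha> + (- ln \<theta>) * real n" if n1: "n \<ge> 1" for n
  proof -
    obtain k where k: "n = Suc k" using n1 by (cases n) auto
    have "ln (c * \<theta> ^ k) \<le> ln (ap n)" using low[of k] k cpos th0 appos[OF n1] by (subst ln_le_cancel_iff) auto
    then have "ln c + real k * ln \<theta> \<le> ln (ap n)" using cpos th0 by (simp add: ln_mult ln_realpow)
    then show ?thesis unfolding F_def f_def \<alpha>_def using k by (simp add: algebra_simps)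
  qed
  obtain l where lim: "(\<lambda>n. F n / real n) \<longlonglongrightarrow> l" and lub: "\<forall>n\<ge>1. F n / real n \<le> l"
    using fekete[of F \<alpha> "- ln \<theta>"] sa bd by blast
  have lpos: "l > 0"
  proof -
    obtain n where n: "n \<ge> 1" "ap n < pmin" using ap_small by blast
    then have "ln (ap n) < ln pmin" using appos[OF n(1)] by simp
    then have "F n > 0" unfolding F_def f_def by simp
    then have "F n / real n > 0" using n by simp
    then show ?thesis using lub n by (meson less_le_trans)
  qed
  have lle: "l \<le> - ln \<theta>"
  proof (rule LIMSEQ_le[OF lim])
    have "(\<lambda>n. \<alpha> / real n + - ln \<theta>) \<longlonglongrightarrow> 0 + - ln \<theta>"
      by (intro tendsto_add lim_const_over_n tendsto_const)
    then show "(\<lambda>n. \<alpha> / real n + - ln \<theta>) \<longlonglongrightarrow> - ln \<theta>" by simp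
    show "\<exists>N. \<forall>n\<ge>N. F n / real n \<le> \<alpha> / real n + - ln \<theta>"
    proof (intro exI[of _ 1] allI impI)
      fix n :: nat assume n: "n \<ge> 1"
      have "F n / real n \<le> (\<alpha> + (- ln \<theta>) * real n) / real n"
        using bd[OF n] n by (simp add: divide_right_mono)
      also have "\<dots> = \<alpha> / real n + - ln \<theta>" using n by (simp add: field_simps)
      finally show "F n / real n \<le> \<alpha> / real n + - ln \<theta>" .
    qed
  qed
  have flim: "(\<lambda>n. f n / real n) \<longlonglongrightarrow> l"
  proof -
    have "(\<lambda>n. F n / real n - ln pmin / real n) \<longlonglongrightarrow> l - 0"
      by (intro tendsto_diff lim lim_const_over_n)
    moreover have "F n / real n - ln pmin / real n = f n / real n" for n
      unfolding F_def by (simp add: diff_divide_distrib add_divide_distrib)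
    ultimately show ?thesis by simp
  qed
  define lo where "lo m = f (m + 1) / real (m + 1) * (1 + 1 / real m)" for m
  define hi where "hi m = f (m + L) / real (m + L) * (1 + real L / real m)" for m
  have lolim: "lo \<longlonglongrightarrow> l * (1 + 0)" unfolding lo_def
    by (intro tendsto_mult tendsto_add tendsto_const lim_const_over_n LIMSEQ_ignore_initial_segment[OF flim])
  have hilim: "hi \<longlonglongrightarrow> l * (1 + 0)" unfolding hi_def
    by (intro tendsto_mult tendsto_add tendsto_const lim_const_over_n LIMSEQ_ignore_initial_segment[OF flim])
  have ev1: "eventually (\<lambda>m. lo m \<le> - ln (survival_prob A P p G m) / real m) sequentially"
    unfolding eventually_sequentially
  proof (intro exI[of _ 1] allI impI)
    fix m :: nat assume m: "m \<ge> 1"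
    have sp: "survival_prob A P p G m > 0"
      using S1[of m] appos[of "m + L"] L_pos by simp
    have e1: "1 + 1 / real m = real (Suc m) / real m" using m by (simp add: field_simps)
    have "lo m = f (Suc m) / real (Suc m) * (real (Suc m) / real m)" unfolding lo_def e1 by simp
    also have "\<dots> = f (Suc m) / real m" by simp
    also have "\<dots> \<le> - ln (survival_prob A P p G m) / real m" unfolding f_def
      using S2[of m] sp m by (intro divide_right_mono) auto
    finally show "lo m \<le> - ln (survival_prob A P p G m) / real m" .
  qed
  have ev2: "eventually (\<lambda>m. - ln (survival_prob A P p G m) / real m \<le> hi m) sequentially"
    unfolding eventually_sequentially
  proof (intro exI[of _ 1] allI impI)
    fix m :: nat assume m: "m \<ge> 1"
    have ap0: "ap (m + L) > 0" using appos[of "m + L"] L_pos by simp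
    have e1: "1 + real L / real m = real (m + L) / real m" using m by (simp add: field_simps)
    have "hi m = f (m + L) / real (m + L) * (real (m + L) / real m)" unfolding hi_def e1 by simp
    also have "\<dots> = f (m + L) / real m" using L_pos by simp
    also have "- ln (survival_prob A P p G m) / real m \<le> \<dots>" unfolding f_def
      using S1[of m] ap0 m by (intro divide_right_mono) auto
    finally show "- ln (survival_prob A P p G m) / real m \<le> hi m" .
  qed
  have "(\<lambda>m. - ln (survival_prob A P p G m) / real m) \<longlonglongrightarrow> l"
    using tendsto_sandwich[OF ev1 ev2] lolim hilim by simp
  then show ?thesis using lpos lle by blast
qed

end

theorem corollary3p5:
  fixes A P :: "real^'n^'n" and p :: "real^'n" and \<theta> :: real and G :: "'n list set"
  assumes "zero_one_matrix A" and "irreducible_matrix A"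
    and "row_stochastic P" and "\<forall>i j. P$i$j > 0 \<longleftrightarrow> A$i$j = 1"
    and "stationary_vector P p"
    and "real_eigenvalue P \<theta>" and "\<theta> > 0" and "\<theta> \<noteq> 1"
    and "\<forall>t. real_eigenvalue P t \<and> t > 0 \<and> t \<noteq> 1 \<longrightarrow> t \<le> \<theta>"
    and "finite G" and "G \<noteq> {}" and "\<forall>w\<in>G. allowed_word A w"
    and "\<exists>i. \<forall>w\<in>G. i \<in> set w"
  shows "\<exists>\<rho>. ((\<lambda>m. - ln (survival_prob A P p G m) / real m) \<longlonglongrightarrow> \<rho>)
             \<and> 0 < \<rho> \<and> \<rho> \<le> - ln \<theta>"
proof -
  obtain i0 where i0: "\<forall>w\<in>G. i0 \<in> set w" using assms(13) by blast
  interpret mk A P p G i0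
    using assms i0 by unfold_locales auto
  show ?thesis by (rule main_limit[OF assms(6,7,8)])
qed

end
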